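(* Let $\mathcal T=(\mathcal S,\to)$ be an LTS over $\Sigma$, $\mathcal V$ a valuation, $Z\in\mathrm{Var}$, $\sigma\in\{\mu,\nu\}$, and $\Phi$ a fixpoint-free formula in positive normal form such that $\sigma Z.\Phi$ is well-formed, and let $S=[\![\sigma Z.\Phi]\!]_{\mathcal V}$. Then $S\vdash^{\mathcal T}_{\mathcal V,\varepsilon}\sigma Z.\Phi$ ($\varepsilon$ the empty definition list) has a successful tableau.
   Context: Fix a set $\Sigma$ and a countably infinite set $\mathrm{Var}$ of variables. An LTS is $\mathcal T=(\mathcal S,\to)$ with ${\to}\subseteq\mathcal S\times\Sigma\times\mathcal S$; $s\xrightarrow{K}s'$ means $s\xrightarrow{a}s'$ for some $a\in K$. A valuation is $\mathcal V:\mathrm{Var}\to 2^{\mathcal S}$. Formulas: $\Phi::=Z\mid\neg\Phi\mid\Phi_1\wedge\Phi_2\mid[K]\Phi\mid\nu Z.\Phi$, well-formed if in each $\nu Z.\Phi$ every free occurrence of $Z$ in $\Phi$ is under an even number of negations. Derived: $\vee$, $\langle K\rangle\Phi=\neg[K]\neg\Phi$, $\mu Z.\Phi=\neg\nu Z.\neg\Phi[Z:=\neg Z]$. Semantics: $[\![Z]\!]_{\mathcal V}=\mathcal V(Z)$, negation = complement, $\wedge$ = intersection, $[\![[K]\Phi]\!]_{\mathcal V}=\{s\mid\forall s'.\ s\xrightarrow{K}s'\Rightarrow s'\in[\![\Phi]\!]_{\mathcal V}\}$, $[\![\nu Z.\Phi]\!]_{\mathcal V}=\bigcup\{S'\mid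 S'\subseteq[\![\Phi]\!]_{\mathcal V[Z:=S']}\}$ (so $[\![\mu Z.\Phi]\!]$ is the least fixpoint). Positive normal form: built from $Z,\neg Z,\wedge,\vee,[K],\langle K\rangle,\nu,\mu$. Fixpoint-free: no subformula $\nu Z.\Psi$ or $\mu Z.\Psi$. Definition list $\Delta=(U_1=\Phi_1)\cdots(U_n=\Phi_n)$: distinct $U_i$, no $U_i$ bound in any $\Phi_j$, $U_j$ not free in $\Phi_i$ for $i\le j$; $\Delta(U_i)=\Phi_i$. Sequent $S\vdash^{\mathcal T}_{\mathcal V,\Delta}\Phi$: $S\subseteq\mathcal S$, $\Phi$ in positive normal form, every $U\in\mathrm{dom}(\Delta)$ positive and not bound in $\Phi$. Rules (conclusion; premises): ($\wedge$) $S\vdash_\Delta\Phi_1\wedge\Phi_2$; $S\vdash_\Delta\Phi_1$, $S\vdash_\Delta\Phi_2$. ($\vee$) $S\vdash_\Delta\Phi_1\vee\Phi_2$; $S_1\vdash_\Delta\Phi_1$, $S_2\vdash_\Delta\Phi_2$, $S=S_1\cup S_2$. ($[K]$) $S\vdash_\Delta[K]\Phi$; $\{s'\mid\exists s\in S.\ s\xrightarrow{K}s'\}\vdash_\Delta\Phi$. ($\langle K\rangle$, witness $f:S\to\mathcal S$, $s\xrightarrow{K}f(s)$) $S\vdash_\Delta\langle K\rangle\Phi$; $f(S)\vdash_\Delta\Phi$. ($\sigma Z$) $S\vdash_\Delta\sigma Z.\Phi$; $S\vdash_{\Delta\cdot(U=\sigma Z.\Phi)}U$, $U$ fresh. (Un)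 $S\vdash_\Delta U$; $S\vdash_\Delta\Phi[Z:=U]$, $\Delta(U)=\sigma Z.\Phi$. (Thin) $S\vdash_\Delta\Phi$; $S'\vdash_\Delta\Phi$, $S\subseteq S'$. A tableau is a finite nonempty ordered tree of nodes labelled by sequents over $\mathcal T,\mathcal V$, each internal node labelled by a rule application (plus witness function for $\langle K\rangle$) forming a rule instance with its ordered children, whose root has empty definition list and whose leaves $n$ (sequent $S_n\vdash_\Delta\Phi$) are terminal: (a) $\Phi\in\{Z,\neg Z\}$, $Z\notin\mathrm{dom}(\Delta)$; (b) $\Phi=\langle K\rangle\Psi$ and some $s\in S_n$ has no $K$-successor; (c) $\Phi=U\in\mathrm{dom}(\Delta)$ and some strict ancestor $m$ has formula $U$ with $S_n\subseteq S_m$ ($\mu$-/$\nu$-leaf according to $\Delta(U)$). Companion nodes: nodes with rule Un; companion leaves of $m$: leaves strictly below $m$ with the same formula and $S_n\subseteq S_m$, excluding companion leaves of companion nodes strictly below $m$. For a child $n'$ of $n$: $s'<_{n',n}s$ iff $s'\in S_{n'}$, $s\in S_n$ and (rule $[K]$, $s\xrightarrow{K}s'$) or (rule $(\langle K\rangle,f)$, $s'=f(s)$) or (other rule, $s'=s$). $\lessdot_{n',n}$ is least with $s\lessdot_{n,n}s$ and ($s'\lessdot_{n',m}s''$, $s''<_{m,n}s$)$\Rightarrow s'\lessdot_{n',n}s$. $<:_{n',n}$, $<:_m$ are least with: $s'<:_m s$ iff some companion leaf $m'$ of $m$ has $s'\in S_{m'}$, $s'<:_{m',m}s$; $s'<:_{n',n}s$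 iff $s'\in S_{n'}$, $s\in S_n$, and $s'\lessdot_{n',n}s$ or some companion node $m\notin\{n,n'\}$ and $t,t'\in S_m$ satisfy $s'<:_{n',m}t'$, $t'(<:_m)^+t$, $t\lessdot_{m,n}s$. A leaf is successful iff: formula $Z$ and $S_n\subseteq\mathcal V(Z)$; or $\neg Z$ and $S_n\cap\mathcal V(Z)=\emptyset$; or $\nu$-leaf; or $\mu$-leaf whose companion node $m$ has $<:_m$ well-founded. A tableau is successful iff all its leaves are successful. *)

theory Defs
  imports Main "HOL-Library.Countable"
begin

text \<open>Core syntax of the modal mu-calculus; actions of type 'a (the alphabet Sigma is
  the type 'a), variables of type 'v.\<close>
datatype ('a, 'v) fml =
    Var 'v
  | Neg "('a, 'v) fml"
  | Conj "('a, 'v) fml" "('a, 'v) fml"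
  | Box "'a set" "('a, 'v) fml"
  | Nu 'v "('a, 'v) fml"

primrec csubst :: "'v \<Rightarrow> ('a, 'v) fml \<Rightarrow> ('a, 'v) fml \<Rightarrow> ('a, 'v) fml" where
  "csubst Z g (Var Y) = (if Y = Z then g else Var Y)"
| "csubst Z g (Neg f) = Neg (csubst Z g f)"
| "csubst Z g (Conj f1 f2) = Conj (csubst Z g f1) (csubst Z g f2)"
| "csubst Z g (Box K f) = Box K (csubst Z g f)"
| "csubst Z g (Nu Y f) = (if Y = Z then Nu Y f else Nu Y (csubst Z g f))"

text \<open>occ_ok Z b f: every free occurrence of Z in f lies under a number of negations
  that is even (if b) / odd (if not b).\<close>
primrec occ_ok :: "'v \<Rightarrow> bool \<Rightarrow> ('a, 'v) fml \<Rightarrow> bool" where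
  "occ_ok Z b (Var Y) = (Y = Z \<longrightarrow> b)"
| "occ_ok Z b (Neg f) = occ_ok Z (\<not> b) f"
| "occ_ok Z b (Conj f1 f2) = (occ_ok Z b f1 \<and> occ_ok Z b f2)"
| "occ_ok Z b (Box K f) = occ_ok Z b f"
| "occ_ok Z b (Nu Y f) = (Y = Z \<or> occ_ok Z b f)"

definition positive :: "'v \<Rightarrow> ('a, 'v) fml \<Rightarrow> bool" where
  "positive Z f = occ_ok Z True f"

primrec wf_fml :: "('a, 'v) fml \<Rightarrow> bool" where
  "wf_fml (Var Y) = True"
| "wf_fml (Neg f) = wf_fml f"
| "wf_fml (Conj f1 f2) = (wf_fml f1 \<and> wf_fml f2)"
| "wf_fml (Box K f) = wf_fml f"
| "wf_fml (Nu Z f) = (wf_fml f \<and> positive Z f)"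

text \<open>An LTS is given by a state set St and a transition relation
  T \<subseteq> St \<times> Sigma \<times> St; valuations map variables to subsets of St.\<close>
primrec sem :: "'s set \<Rightarrow> ('s \<times> 'a \<times> 's) set \<Rightarrow> ('v \<Rightarrow> 's set) \<Rightarrow> ('a, 'v) fml \<Rightarrow> 's set" where
  "sem St T V (Var Z) = V Z"
| "sem St T V (Neg f) = St - sem St T V f"
| "sem St T V (Conj f1 f2) = sem St T V f1 \<inter> sem St T V f2"
| "sem St T V (Box K f) = {s \<in> St. \<forall>a s'. a \<in> K \<longrightarrow> (s, a, s') \<in> T \<longrightarrow> s' \<in> sem St T V f}"
| "sem St T V (Nu Z f) = \<Union>{S'. S' \<subseteq> St \<and> S' \<subseteq> sem St T (V(Z := S')) f}"

datatype fp = Mu | Nuf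

text \<open>Formulas in positive normal form, built from Z, not Z, and, or, [K], <K>, nu, mu.
  PFix Mu Z f is muZ.f and PFix Nuf Z f is nuZ.f.\<close>
datatype ('a, 'v) pnf =
    PVar 'v
  | PNVar 'v
  | PAnd "('a, 'v) pnf" "('a, 'v) pnf"
  | POr "('a, 'v) pnf" "('a, 'v) pnf"
  | PBox "'a set" "('a, 'v) pnf"
  | PDia "'a set" "('a, 'v) pnf"
  | PFix fp 'v "('a, 'v) pnf"

fun to_core :: "('a, 'v) pnf \<Rightarrow> ('a, 'v) fml" where
  "to_core (PVar Z) = Var Z"
| "to_core (PNVar Z) = Neg (Var Z)"
| "to_core (PAnd f g) = Conj (to_core f) (to_core g)"
| "to_core (POr f g) = Neg (Conj (Neg (to_core f)) (Neg (to_core g)))"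
| "to_core (PBox K f) = Box K (to_core f)"
| "to_core (PDia K f) = Neg (Box K (Neg (to_core f)))"
| "to_core (PFix Nuf Z f) = Nu Z (to_core f)"
| "to_core (PFix Mu Z f) = Neg (Nu Z (Neg (csubst Z (Neg (Var Z)) (to_core f))))"

definition psem :: "'s set \<Rightarrow> ('s \<times> 'a \<times> 's) set \<Rightarrow> ('v \<Rightarrow> 's set) \<Rightarrow> ('a, 'v) pnf \<Rightarrow> 's set" where
  "psem St T V f = sem St T V (to_core f)"

primrec fixfree :: "('a, 'v) pnf \<Rightarrow> bool" where
  "fixfree (PVar Z) = True"
| "fixfree (PNVar Z) = True"
| "fixfree (PAnd f g) = (fixfree f \<and> fixfree g)"
| "fixfree (POr f g) = (fixfree f \<and> fixfree g)"
| "fixfree (PBox K f) = fixfree f"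
| "fixfree (PDia K f) = fixfree f"
| "fixfree (PFix s Z f) = False"

primrec fvars :: "('a, 'v) pnf \<Rightarrow> 'v set" where
  "fvars (PVar Z) = {Z}"
| "fvars (PNVar Z) = {Z}"
| "fvars (PAnd f g) = fvars f \<union> fvars g"
| "fvars (POr f g) = fvars f \<union> fvars g"
| "fvars (PBox K f) = fvars f"
| "fvars (PDia K f) = fvars f"
| "fvars (PFix s Z f) = fvars f - {Z}"

primrec bvars :: "('a, 'v) pnf \<Rightarrow> 'v set" where
  "bvars (PVar Z) = {}"
| "bvars (PNVar Z) = {}"
| "bvars (PAnd f g) = bvars f \<union> bvars g"
| "bvars (POr f g) = bvars f \<union> bvars g"
| "bvars (PBox K f) = bvars f"
| "bvars (PDia K f) = bvars f"
| "bvars (PFix s Z f) = insert Z (bvars f)"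

primrec psubst :: "'v \<Rightarrow> 'v \<Rightarrow> ('a, 'v) pnf \<Rightarrow> ('a, 'v) pnf" where
  "psubst Z U (PVar Y) = PVar (if Y = Z then U else Y)"
| "psubst Z U (PNVar Y) = PNVar (if Y = Z then U else Y)"
| "psubst Z U (PAnd f g) = PAnd (psubst Z U f) (psubst Z U g)"
| "psubst Z U (POr f g) = POr (psubst Z U f) (psubst Z U g)"
| "psubst Z U (PBox K f) = PBox K (psubst Z U f)"
| "psubst Z U (PDia K f) = PDia K (psubst Z U f)"
| "psubst Z U (PFix s Y f) = (if Y = Z then PFix s Y f else PFix s Y (psubst Z U f))"

type_synonym ('a, 'v) deflist = "('v \<times> ('a, 'v) pnf) list"

definition ddom :: "('a, 'v) deflist \<Rightarrow> 'v set" where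
  "ddom D = fst ` set D"

definition deflist_ok :: "('a, 'v) deflist \<Rightarrow> bool" where
  "deflist_ok D \<longleftrightarrow> distinct (map fst D)
     \<and> (\<forall>i < length D. \<forall>j < length D. fst (D ! i) \<notin> bvars (snd (D ! j)))
     \<and> (\<forall>i < length D. \<forall>j < length D. i \<le> j \<longrightarrow> fst (D ! j) \<notin> fvars (snd (D ! i)))"

type_synonym ('s, 'a, 'v) sequent = "'s set \<times> ('a, 'v) deflist \<times> ('a, 'v) pnf"

definition sequent_ok :: "'s set \<Rightarrow> ('s, 'a, 'v) sequent \<Rightarrow> bool" where
  "sequent_ok St sq \<longleftrightarrow> (case sq of (S, D, f) \<Rightarrow>
     S \<subseteq> St \<and> deflist_ok D \<and>
     (\<forall>U \<in> ddom D. positive U (to_core f) \<and> U \<notin> bvars f))"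

datatype 's rule = RAnd | ROr | RBox | RDia "'s \<Rightarrow> 's" | RFix | RUn | RThin

definition fresh :: "'v \<Rightarrow> ('a, 'v) deflist \<Rightarrow> ('a, 'v) pnf \<Rightarrow> bool" where
  "fresh U D f \<longleftrightarrow> U \<notin> ddom D \<and> U \<notin> fvars f \<and> U \<notin> bvars f
     \<and> (\<forall>p \<in> set D. U \<notin> fvars (snd p) \<and> U \<notin> bvars (snd p))"

fun rule_inst :: "('s \<times> 'a \<times> 's) set \<Rightarrow> 's rule \<Rightarrow> ('s, 'a, 'v) sequent
                   \<Rightarrow> ('s, 'a, 'v) sequent list \<Rightarrow> bool" where
  "rule_inst T RAnd (S, D, f) ps \<longleftrightarrow>
     (\<exists>f1 f2. f = PAnd f1 f2 \<and> ps = [(S, D, f1), (S, D, f2)])"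
| "rule_inst T ROr (S, D, f) ps \<longleftrightarrow>
     (\<exists>f1 f2 S1 S2. f = POr f1 f2 \<and> S = S1 \<union> S2 \<and> ps = [(S1, D, f1), (S2, D, f2)])"
| "rule_inst T RBox (S, D, f) ps \<longleftrightarrow>
     (\<exists>K g. f = PBox K g \<and> ps = [({s'. \<exists>s \<in> S. \<exists>a \<in> K. (s, a, s') \<in> T}, D, g)])"
| "rule_inst T (RDia w) (S, D, f) ps \<longleftrightarrow>
     (\<exists>K g. f = PDia K g \<and> (\<forall>s \<in> S. \<exists>a \<in> K. (s, a, w s) \<in> T) \<and> ps = [(w ` S, D, g)])"
| "rule_inst T RFix (S, D, f) ps \<longleftrightarrow>
     (\<exists>sg Z g U. f = PFix sg Z g \<and> fresh U D f \<and> ps = [(S, D @ [(U, f)], PVar U)])"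
| "rule_inst T RUn (S, D, f) ps \<longleftrightarrow>
     (\<exists>U sg Z g. f = PVar U \<and> map_of D U = Some (PFix sg Z g) \<and> ps = [(S, D, psubst Z U g)])"
| "rule_inst T RThin (S, D, f) ps \<longleftrightarrow>
     (\<exists>S'. S \<subseteq> S' \<and> ps = [(S', D, f)])"

section \<open>Tableaux as finite ordered trees; nodes are addressed by positions (paths)\<close>

datatype ('s, 'a, 'v) tab =
  Nd (nset: "'s set") (ndefs: "('a, 'v) deflist") (nfml: "('a, 'v) pnf")
     (nrule: "'s rule option") (nkids: "('s, 'a, 'v) tab list")

definition nseq :: "('s, 'a, 'v) tab \<Rightarrow> ('s, 'a, 'v) sequent" where
  "nseq t = (nset t, ndefs t, nfml t)"

fun valid_pos :: "('s, 'a, 'v) tab \<Rightarrow> nat list \<Rightarrow> bool" where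
  "valid_pos t [] = True"
| "valid_pos t (i # p) = (i < length (nkids t) \<and> valid_pos (nkids t ! i) p)"

definition positions :: "('s, 'a, 'v) tab \<Rightarrow> nat list set" where
  "positions t = {p. valid_pos t p}"

fun at :: "('s, 'a, 'v) tab \<Rightarrow> nat list \<Rightarrow> ('s, 'a, 'v) tab" where
  "at t [] = t"
| "at t (i # p) = at (nkids t ! i) p"

definition below :: "nat list \<Rightarrow> nat list \<Rightarrow> bool" where
  "below m n \<longleftrightarrow> (\<exists>d. d \<noteq> [] \<and> n = m @ d)"

definition is_leaf :: "('s, 'a, 'v) tab \<Rightarrow> nat list \<Rightarrow> bool" where
  "is_leaf t p \<longleftrightarrow> p \<in> positions t \<and> nkids (at t p) = []"

definition is_child :: "('s, 'a, 'v) tab \<Rightarrow> nat list \<Rightarrow> nat list \<Rightarrow> bool" where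
  "is_child t n' n \<longleftrightarrow> n \<in> positions t \<and> (\<exists>i < length (nkids (at t n)). n' = n @ [i])"

definition c_leaf :: "('s, 'a, 'v) tab \<Rightarrow> nat list \<Rightarrow> bool" where
  "c_leaf t n \<longleftrightarrow> is_leaf t n \<and> (\<exists>U. nfml (at t n) = PVar U \<and> U \<in> ddom (ndefs (at t n)) \<and>
     (\<exists>m. below m n \<and> nfml (at t m) = PVar U \<and> nset (at t n) \<subseteq> nset (at t m)))"

definition terminal :: "('s \<times> 'a \<times> 's) set \<Rightarrow> ('s, 'a, 'v) tab \<Rightarrow> nat list \<Rightarrow> bool" where
  "terminal T t n \<longleftrightarrow>
     (\<exists>Z. (nfml (at t n) = PVar Z \<or> nfml (at t n) = PNVar Z) \<and> Z \<notin> ddom (ndefs (at t n)))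
   \<or> (\<exists>K g. nfml (at t n) = PDia K g \<and> (\<exists>s \<in> nset (at t n). \<not> (\<exists>a \<in> K. \<exists>s'. (s, a, s') \<in> T)))
   \<or> c_leaf t n"

definition is_tableau :: "'s set \<Rightarrow> ('s \<times> 'a \<times> 's) set \<Rightarrow> ('s, 'a, 'v) tab \<Rightarrow> bool" where
  "is_tableau St T t \<longleftrightarrow> ndefs t = [] \<and>
     (\<forall>p \<in> positions t. sequent_ok St (nseq (at t p)) \<and>
        (case nrule (at t p) of
           None \<Rightarrow> nkids (at t p) = [] \<and> terminal T t p
         | Some r \<Rightarrow> rule_inst T r (nseq (at t p)) (map nseq (nkids (at t p)))))"

definition comp_node :: "('s, 'a, 'v) tab \<Rightarrow> nat list \<Rightarrow> bool" where
  "comp_node t m \<longleftrightarrow> m \<in> positions t \<and> nrule (at t m) = Some RUn"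

definition cl_base :: "('s, 'a, 'v) tab \<Rightarrow> nat list \<Rightarrow> nat list \<Rightarrow> bool" where
  "cl_base t m n \<longleftrightarrow> comp_node t m \<and> is_leaf t n \<and> below m n \<and>
     nfml (at t n) = nfml (at t m) \<and> nset (at t n) \<subseteq> nset (at t m)"

text \<open>cl_upto t k m n: n is a companion leaf of m, for pairs with depth difference \<le> k
  (the recursive exclusion of companion leaves of companion nodes strictly below m).\<close>
primrec cl_upto :: "('s, 'a, 'v) tab \<Rightarrow> nat \<Rightarrow> nat list \<Rightarrow> nat list \<Rightarrow> bool" where
  "cl_upto t 0 m n = False"
| "cl_upto t (Suc k) m n \<longleftrightarrow> cl_base t m n \<and> length n \<le> length m + Suc k \<and>
     \<not> (\<exists>m'. below m m' \<and> comp_node t m' \<and> cl_upto t k m' n)"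

definition comp_leaf :: "('s, 'a, 'v) tab \<Rightarrow> nat list \<Rightarrow> nat list \<Rightarrow> bool" where
  "comp_leaf t m n \<longleftrightarrow> cl_upto t (length n) m n"

definition step :: "('s \<times> 'a \<times> 's) set \<Rightarrow> ('s, 'a, 'v) tab \<Rightarrow> nat list \<Rightarrow> 's \<Rightarrow> nat list \<Rightarrow> 's \<Rightarrow> bool" where
  "step T t n' s' n s \<longleftrightarrow> is_child t n' n \<and> s' \<in> nset (at t n') \<and> s \<in> nset (at t n) \<and>
     (case nrule (at t n) of
        Some RBox \<Rightarrow> (\<exists>K g. nfml (at t n) = PBox K g \<and> (\<exists>a \<in> K. (s, a, s') \<in> T))
      | Some (RDia w) \<Rightarrow> s' = w s
      | _ \<Rightarrow> s' = s)"

inductive trace :: "('s \<times> 'a \<times> 's) set \<Rightarrow> ('s, 'a, 'v) tab \<Rightarrow> nat list \<Rightarrow> 's \<Rightarrow> nat list \<Rightarrow> 's \<Rightarrow> bool"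
  for T t where
  trace_refl: "trace T t n s n s"
| trace_step: "trace T t n' s' m s'' \<Longrightarrow> step T t m s'' n s \<Longrightarrow> trace T t n' s' n s"

lemma tranclp_mono_aux[mono]: "(\<And>a b. x a b \<longrightarrow> y a b) \<Longrightarrow> x\<^sup>+\<^sup>+ a b \<longrightarrow> y\<^sup>+\<^sup>+ a b"
proof
  assume h: "\<And>a b. x a b \<longrightarrow> y a b"
  assume "x\<^sup>+\<^sup>+ a b"
  then show "y\<^sup>+\<^sup>+ a b"
    by (induction rule: tranclp.induct) (use h in \<open>auto intro: tranclp.intros\<close>)
qed

inductive cw :: "('s \<times> 'a \<times> 's) set \<Rightarrow> ('s, 'a, 'v) tab \<Rightarrow> nat list \<Rightarrow> 's \<Rightarrow> nat list \<Rightarrow> 's \<Rightarrow> bool"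
  and cm :: "('s \<times> 'a \<times> 's) set \<Rightarrow> ('s, 'a, 'v) tab \<Rightarrow> nat list \<Rightarrow> 's \<Rightarrow> 's \<Rightarrow> bool"
  for T t where
  cm_intro: "comp_leaf t m m' \<Longrightarrow> s' \<in> nset (at t m') \<Longrightarrow> cw T t m' s' m s \<Longrightarrow> cm T t m s' s"
| cw_trace: "s' \<in> nset (at t n') \<Longrightarrow> s \<in> nset (at t n) \<Longrightarrow> trace T t n' s' n s \<Longrightarrow> cw T t n' s' n s"
| cw_comp: "s' \<in> nset (at t n') \<Longrightarrow> s \<in> nset (at t n) \<Longrightarrow> comp_node t m \<Longrightarrow> m \<noteq> n \<Longrightarrow> m \<noteq> n' \<Longrightarrow>
    u \<in> nset (at t m) \<Longrightarrow> u' \<in> nset (at t m) \<Longrightarrow>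
    cw T t n' s' m u' \<Longrightarrow> (cm T t m)\<^sup>+\<^sup>+ u' u \<Longrightarrow> trace T t m u n s \<Longrightarrow> cw T t n' s' n s"

definition leaf_success :: "('s \<times> 'a \<times> 's) set \<Rightarrow> ('v \<Rightarrow> 's set) \<Rightarrow> ('s, 'a, 'v) tab \<Rightarrow> nat list \<Rightarrow> bool" where
  "leaf_success T V t n \<longleftrightarrow>
     (\<exists>Z. nfml (at t n) = PVar Z \<and> Z \<notin> ddom (ndefs (at t n)) \<and> nset (at t n) \<subseteq> V Z)
   \<or> (\<exists>Z. nfml (at t n) = PNVar Z \<and> Z \<notin> ddom (ndefs (at t n)) \<and> nset (at t n) \<inter> V Z = {})
   \<or> (c_leaf t n \<and> (\<exists>U Z g. nfml (at t n) = PVar U \<and> map_of (ndefs (at t n)) U = Some (PFix Nuf Z g)))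
   \<or> (c_leaf t n \<and> (\<exists>U Z g. nfml (at t n) = PVar U \<and> map_of (ndefs (at t n)) U = Some (PFix Mu Z g))
       \<and> (\<exists>m. comp_leaf t m n \<and> wfP (cm T t m)))"

definition successful_tableau :: "'s set \<Rightarrow> ('s \<times> 'a \<times> 's) set \<Rightarrow> ('v \<Rightarrow> 's set) \<Rightarrow> ('s, 'a, 'v) tab \<Rightarrow> bool" where
  "successful_tableau St T V t \<longleftrightarrow> is_tableau St T t \<and> (\<forall>n. is_leaf t n \<longrightarrow> leaf_success T V t n)"

end

theory Submission
  imports Defs "HOL-Library.Bourbaki_Witt_Fixpoint"
begin

primrec ps :: "'s set \<Rightarrow> ('s \<times> 'a \<times> 's) set \<Rightarrow> ('v \<Rightarrow> 's set) \<Rightarrow> ('a, 'v) pnf \<Rightarrow> 's set" where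
  "ps St T W (PVar Y) = W Y"
| "ps St T W (PNVar Y) = St - W Y"
| "ps St T W (PAnd f g) = ps St T W f \<inter> ps St T W g"
| "ps St T W (POr f g) = ps St T W f \<union> ps St T W g"
| "ps St T W (PBox K f) = {s \<in> St. \<forall>a s'. a \<in> K \<longrightarrow> (s, a, s') \<in> T \<longrightarrow> s' \<in> ps St T W f}"
| "ps St T W (PDia K f) = {s \<in> St. \<exists>a \<in> K. \<exists>s'. (s, a, s') \<in> T \<and> s' \<in> ps St T W f}"
| "ps St T W (PFix x Y f) = {}"

primrec noneg :: "'v \<Rightarrow> ('a, 'v) pnf \<Rightarrow> bool" where
  "noneg Z (PVar Y) = True"
| "noneg Z (PNVar Y) = (Y \<noteq> Z)"
| "noneg Z (PAnd f g) = (noneg Z f \<and> noneg Z g)"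
| "noneg Z (POr f g) = (noneg Z f \<and> noneg Z g)"
| "noneg Z (PBox K f) = noneg Z f"
| "noneg Z (PDia K f) = noneg Z f"
| "noneg Z (PFix x Y f) = True"

lemma ps_St: "(\<forall>Y. W Y \<subseteq> St) \<Longrightarrow> ps St T W f \<subseteq> St"
  by (induction f) auto

lemma psem_ps: "fixfree f \<Longrightarrow> \<forall>Y. W Y \<subseteq> St \<Longrightarrow> T \<subseteq> St \<times> UNIV \<times> St \<Longrightarrow>
   sem St T W (to_core f) = ps St T W f"
proof (induction f)
  case (POr f1 f2)
  then show ?case using ps_St[of W St T f1] ps_St[of W St T f2] by auto
next
  case (PDia K f)
  then show ?case by auto
qed auto

lemma occ_noneg: "fixfree f \<Longrightarrow> occ_ok Z True (to_core f) \<Longrightarrow> noneg Z f"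
  by (induction f) auto

lemma ps_mono: "noneg Z f \<Longrightarrow> A \<subseteq> B \<Longrightarrow> ps St T (W(Z:=A)) f \<subseteq> ps St T (W(Z:=B)) f"
  by (induction f) fastforce+

lemma csubst_sem: "fixfree f \<Longrightarrow>
  sem St T W (csubst Z (Neg (Var Z)) (to_core f)) = sem St T (W(Z := St - W Z)) (to_core f)"
  by (induction f) auto

lemma csubst_occ: "fixfree f \<Longrightarrow>
  occ_ok Z b (csubst Z (Neg (Var Z)) (to_core f)) = occ_ok Z (\<not> b) (to_core f)"
  by (induction f arbitrary: b) auto

lemma wf_noneg: "wf_fml (to_core (PFix sg Z Phi)) \<Longrightarrow> fixfree Phi \<Longrightarrow> noneg Z Phi"
  apply (cases sg)
  apply (auto simp: positive_def csubst_occ intro: occ_noneg)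
  done

lemma pos_psubst: "fixfree f \<Longrightarrow> noneg Z f \<Longrightarrow> U \<notin> fvars f \<Longrightarrow> occ_ok U True (to_core (psubst Z U f))"
  by (induction f) auto

lemma bvars_fixfree: "fixfree f \<Longrightarrow> bvars f = {}"
  by (induction f) auto

lemma fixfree_psubst: "fixfree f \<Longrightarrow> fixfree (psubst Z U f)"
  by (induction f) auto

lemma finite_fvars: "finite (fvars f)" by (induction f) auto
lemma finite_bvars: "finite (bvars f)" by (induction f) auto


lemma bw_sets:
  fixes G :: "'x set \<Rightarrow> 'x set"
  assumes ext: "\<And>X. X \<subseteq> G X"
  shows "bourbaki_witt_fixpoint Union {(A,B). A \<subseteq> B} G"
proof -
  have F: "Field {(A::'x set, B). A \<subseteq> B} = UNIV" by (auto simp: Field_def)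
  show ?thesis
    apply unfold_locales
    using F ext
    by (auto simp: order_on_defs refl_on_def trans_def antisym_def Chains_def; blast)+
qed

lemma tower:
  fixes F :: "'x set \<Rightarrow> 'x set"
  assumes mono: "\<And>X Y. X \<subseteq> Y \<Longrightarrow> F X \<subseteq> F Y"
  shows "\<exists>C. (\<forall>A\<in>C. \<forall>B\<in>C. A \<subseteq> B \<or> B \<subseteq> A)
     \<and> (\<forall>M. M \<subseteq> C \<longrightarrow> M \<noteq> {} \<longrightarrow> (\<exists>A\<in>M. \<forall>B\<in>M. A \<subseteq> B))
     \<and> (\<forall>P. F P \<subseteq> P \<longrightarrow> (\<forall>A\<in>C. A \<subseteq> P))
     \<and> F (\<Union>C) \<subseteq> \<Union>C
     \<and> (\<forall>A\<in>C. \<forall>s\<in>A. \<exists>B\<in>C. s \<notin> B \<and> s \<in> F B)"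
proof -
  define G where "G X = X \<union> F X" for X
  have ext: "\<And>X. X \<subseteq> G X" by (auto simp: G_def)
  have gmono: "\<And>X Y. X \<subseteq> Y \<Longrightarrow> G X \<subseteq> G Y" using mono by (auto simp: G_def)
  interpret bw: bourbaki_witt_fixpoint Union "{(A,B). A \<subseteq> B}" G
    by (rule bw_sets[OF ext])
  define C where "C = bw.iterates_above {}"
  have FieldU: "x \<in> Field {(A::'x set, B). A \<subseteq> B}" for x by (auto simp: Field_def)
  have chainC: "C \<in> Chains {(A,B). A \<subseteq> B}"
    unfolding C_def by (rule bw.chain_iterates_above[OF FieldU])
  have chain: "\<forall>A\<in>C. \<forall>B\<in>C. A \<subseteq> B \<or> B \<subseteq> A"
    using chainC by (auto simp: Chains_def)
  have succ: "Y \<subseteq> X \<or> G X \<subseteq> Y" if "X \<in> C" "Y \<in> C" for X Y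
  proof -
    from bw.iterates_above_triangle[OF that[unfolded C_def] FieldU]
    have "X \<in> bw.iterates_above Y \<or> Y \<in> bw.iterates_above X" .
    then show ?thesis
    proof
      assume "X \<in> bw.iterates_above Y"
      then show ?thesis using bw.iterates_above_ge[OF _ FieldU] by blast
    next
      assume "Y \<in> bw.iterates_above X"
      then have "Y = X \<or> Y \<in> bw.iterates_above (G X)"
        using bw.iterates_above_successor[OF _ FieldU] by blast
      then show ?thesis using bw.iterates_above_ge[OF _ FieldU] by blast
    qed
  qed
  have empty: "{} \<in> C" unfolding C_def by (rule bw.base)
  have stepC: "G X \<in> C" if "X \<in> C" for X using that unfolding C_def by (rule bw.step)
  have supC: "\<Union>M \<in> C" if "M \<subseteq> C" for M
  proof (cases "M = {}")
    case True then show ?thesis using empty by simp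
  next
    case False
    have "M \<in> Chains {(A,B). A \<subseteq> B}" using chain that by (auto simp: Chains_def)
    then show ?thesis using False that unfolding C_def by (intro bw.Sup) auto
  qed
  have ind: "A \<subseteq> P" if "F P \<subseteq> P" "A \<in> C" for P A
    using that(2) unfolding C_def
  proof (induction A rule: bw.iterates_above.induct)
    case base then show ?case by simp
  next
    case (step x) then show ?case using mono[of x P] that(1) by (auto simp: G_def)
  next
    case (Sup M) then show ?case by auto
  qed
  have topind: "A \<subseteq> B" if "G B = B" "A \<in> C" for A B
    using that(2) unfolding C_def
  proof (induction A rule: bw.iterates_above.induct)
    case base then show ?case by simp
  next
    case (step x) then show ?case using gmono[of x B] that(1) by auto
  next
    case (Sup M) then show ?case by auto
  qed
  have least: "\<exists>A\<in>M. \<forall>B\<in>M. A \<subseteq> B" if M: "M \<subseteq> C" "M \<noteq> {}" for M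
  proof -
    define L where "L = {A \<in> C. \<forall>m\<in>M. A \<subseteq> m}"
    have BC: "\<Union>L \<in> C" by (rule supC) (auto simp: L_def)
    have Bm: "\<forall>m\<in>M. \<Union>L \<subseteq> m" by (auto simp: L_def)
    show ?thesis
    proof (cases "\<Union>L \<in> M")
      case True then show ?thesis using Bm by blast
    next
      case False
      have "G (\<Union>L) \<subseteq> m" if "m \<in> M" for m
      proof -
        have "m \<in> C" using that M by auto
        from succ[OF BC this] have "m \<subseteq> \<Union>L \<or> G (\<Union>L) \<subseteq> m" .
        moreover have "m \<noteq> \<Union>L" using False that by auto
        ultimately show ?thesis using Bm that by blast
      qed
      then have "G (\<Union>L) \<in> L" using stepC[OF BC] by (auto simp: L_def)
      then have "G (\<Union>L) \<subseteq> \<Union>L" by auto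
      then have fixB: "G (\<Union>L) = \<Union>L" using ext by (simp add: subset_antisym)
      obtain m where m: "m \<in> M" using M by auto
      then have "m \<subseteq> \<Union>L" using topind[OF fixB] M by auto
      then have "m = \<Union>L" using Bm m by auto
      then show ?thesis using False m by simp
    qed
  qed
  have top: "F (\<Union>C) \<subseteq> \<Union>C"
  proof -
    have "G (\<Union>C) \<in> C" by (rule stepC[OF supC]) simp
    then show ?thesis by (auto simp: G_def)
  qed
  have rank: "\<forall>A\<in>C. \<forall>s\<in>A. \<exists>B\<in>C. s \<notin> B \<and> s \<in> F B"
  proof
    fix A assume "A \<in> C"
    then show "\<forall>s\<in>A. \<exists>B\<in>C. s \<notin> B \<and> s \<in> F B"
      unfolding C_def
    proof (induction A rule: bw.iterates_above.induct)
      case base then show ?case by simp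
    next
      case (step x)
      show ?case
      proof
        fix s assume s: "s \<in> G x"
        show "\<exists>B\<in>bw.iterates_above {}. s \<notin> B \<and> s \<in> F B"
        proof (cases "s \<in> x")
          case True then show ?thesis using step.IH by blast
        next
          case False then have "s \<in> F x" using s by (simp add: G_def)
          then show ?thesis using False step.hyps by blast
        qed
      qed
    next
      case (Sup M) then show ?case by auto
    qed
  qed
  show ?thesis
    apply (rule exI[of _ C])
    using chain least ind top rank by (intro conjI allI impI; simp)
qed


fun ochild :: "('a, 'v) pnf \<Rightarrow> nat \<Rightarrow> ('a, 'v) pnf" where
  "ochild (PAnd a b) i = (if i = 0 then a else b)"
| "ochild (POr a b) i = (if i = 0 then a else b)"
| "ochild (PBox K a) i = a"
| "ochild (PDia K a) i = a"
| "ochild f i = f"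

fun osub :: "('a, 'v) pnf \<Rightarrow> nat list \<Rightarrow> ('a, 'v) pnf" where
  "osub f [] = f"
| "osub f (i # q) = osub (ochild f i) q"

lemma osub_snoc: "osub f (q @ [i]) = ochild (osub f q) i"
  by (induction q arbitrary: f) auto

lemma at_snoc: "at t (p @ [i]) = nkids (at t p) ! i"
  by (induction p arbitrary: t) auto

lemma valid_snoc: "valid_pos t (p @ [i]) \<longleftrightarrow> valid_pos t p \<and> i < length (nkids (at t p))"
  by (induction p arbitrary: t) auto

definition stepcond :: "('s \<times> 'a \<times> 's) set \<Rightarrow> 's rule option \<Rightarrow> ('a, 'v) pnf \<Rightarrow> 's \<Rightarrow> 's \<Rightarrow> bool" where
  "stepcond T r f s s' \<longleftrightarrow> (case r of
        Some RBox \<Rightarrow> (\<exists>K g. f = PBox K g \<and> (\<exists>a \<in> K. (s, a, s') \<in> T))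
      | Some (RDia w) \<Rightarrow> s' = w s
      | _ \<Rightarrow> s' = s)"

locale constr =
  fixes St :: "'s set" and T :: "('s \<times> 'a \<times> 's) set" and V :: "'v \<Rightarrow> 's set"
    and Z U :: 'v and Phi :: "('a, 'v) pnf" and sg :: fp and S :: "'s set"
    and Lv :: "'s set set" and lv :: "('a, 'v) pnf \<Rightarrow> 's \<Rightarrow> 's set"
  assumes T_St: "T \<subseteq> St \<times> UNIV \<times> St"
    and V_St: "\<forall>Y. V Y \<subseteq> St"
    and Phi_ff: "fixfree Phi" and Phi_nn: "noneg Z Phi"
    and UZ: "U \<noteq> Z" and Ufv: "U \<notin> fvars Phi"
    and S_St: "S \<subseteq> St" and Lv_S: "\<forall>B\<in>Lv. B \<subseteq> S"
    and LV: "\<And>\<psi> x B. B \<in> Lv \<Longrightarrow> x \<in> ps St T (V(Z:=B)) \<psi> \<Longrightarrow>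
               lv \<psi> x \<in> Lv \<and> lv \<psi> x \<subseteq> B \<and> x \<in> ps St T (V(Z := lv \<psi> x)) \<psi>"
    and root: "\<forall>s\<in>S. \<exists>B\<in>Lv. s \<in> ps St T (V(Z:=B)) Phi"
    and muwf: "sg = Mu \<Longrightarrow> (\<forall>s\<in>S. \<exists>B\<in>Lv. s \<notin> B \<and> s \<in> ps St T (V(Z:=B)) Phi)
                  \<and> wfP (\<lambda>x s. \<exists>B\<in>Lv. x \<in> B \<and> s \<notin> B)"
begin

definition D :: "('a, 'v) deflist" where "D = [(U, PFix sg Z Phi)]"

definition orset :: "('a, 'v) pnf \<Rightarrow> ('a, 'v) pnf \<Rightarrow> 's set" where
  "orset a b = {x. x \<in> ps St T (V(Z := lv (POr a b) x)) a}"

definition dw :: "'a set \<Rightarrow> ('a, 'v) pnf \<Rightarrow> 's \<Rightarrow> 's" where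
  "dw K a x = (SOME y. \<exists>k\<in>K. (x, k, y) \<in> T \<and> y \<in> ps St T (V(Z := lv (PDia K a) x)) a)"

primrec build :: "('a, 'v) pnf \<Rightarrow> 's set \<Rightarrow> ('s, 'a, 'v) tab" where
  "build (PVar Y) X = Nd X D (psubst Z U (PVar Y)) None []"
| "build (PNVar Y) X = Nd X D (psubst Z U (PNVar Y)) None []"
| "build (PAnd a b) X = Nd X D (psubst Z U (PAnd a b)) (Some RAnd) [build a X, build b X]"
| "build (POr a b) X = Nd X D (psubst Z U (POr a b)) (Some ROr)
      [build a (X \<inter> orset a b), build b (X - orset a b)]"
| "build (PBox K a) X = Nd X D (psubst Z U (PBox K a)) (Some RBox)
      [build a {s'. \<exists>s \<in> X. \<exists>k \<in> K. (s, k, s') \<in> T}]"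
| "build (PDia K a) X = Nd X D (psubst Z U (PDia K a)) (Some (RDia (dw K a))) [build a (dw K a ` X)]"
| "build (PFix f Y a) X = Nd X D (PFix f Y a) None []"

definition good :: "('a, 'v) pnf \<Rightarrow> bool" where
  "good f \<longleftrightarrow> fixfree f \<and> noneg Z f \<and> U \<notin> fvars f"

definition inv :: "('a, 'v) pnf \<Rightarrow> 's set \<Rightarrow> bool" where
  "inv f X \<longleftrightarrow> (\<forall>x\<in>X. lv f x \<in> Lv \<and> x \<in> ps St T (V(Z := lv f x)) f)"

lemma inv_from: "(\<And>x. x \<in> Y \<Longrightarrow> \<exists>B\<in>Lv. x \<in> ps St T (V(Z:=B)) g) \<Longrightarrow> inv g Y"
  unfolding inv_def using LV by blast

lemma nset_build[simp]: "nset (build f X) = X" by (cases f) auto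
lemma ndefs_build[simp]: "ndefs (build f X) = D" by (cases f) auto
lemma nfml_build: "fixfree f \<Longrightarrow> nfml (build f X) = psubst Z U f" by (cases f) auto

lemma dw_prop:
  assumes "s \<in> ps St T (V(Z := lv (PDia K a) s)) (PDia K a)"
  shows "\<exists>k\<in>K. (s, k, dw K a s) \<in> T \<and> dw K a s \<in> ps St T (V(Z := lv (PDia K a) s)) a"
proof -
  from assms have "\<exists>y. \<exists>k\<in>K. (s, k, y) \<in> T \<and> y \<in> ps St T (V(Z := lv (PDia K a) s)) a" by auto
  then show ?thesis unfolding dw_def by (rule someI_ex)
qed

lemma child_sem:
  assumes g: "good f" and iv: "inv f X" and i: "i < length (nkids (build f X))"
    and s: "s \<in> X" and s': "s' \<in> nset (nkids (build f X) ! i)"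
    and sc: "stepcond T (nrule (build f X)) (nfml (build f X)) s s'"
  shows "s' \<in> ps St T (V(Z := lv f s)) (ochild f i)"
proof -
  have sf: "s \<in> ps St T (V(Z := lv f s)) f" using iv s by (auto simp: inv_def)
  show ?thesis
  proof (cases f)
    case (PAnd a b) then show ?thesis using sf i s' sc by (auto simp: stepcond_def less_Suc_eq)
  next
    case (POr a b) then show ?thesis using sf i s' sc by (auto simp: stepcond_def less_Suc_eq orset_def)
  next
    case (PBox K a) then show ?thesis using sf i s' sc by (auto simp: stepcond_def)
  next
    case (PDia K a) then show ?thesis using dw_prop[of s K a] sf i s' sc by (auto simp: stepcond_def)
  qed (use i in auto)
qed

lemma kid:
  assumes g: "good f" and iv: "inv f X" and i: "i < length (nkids (build f X))"
  shows "\<exists>Y. nkids (build f X) ! i = build (ochild f i) Y \<and> inv (ochild f i) Y \<and> good (ochild f i)"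
proof -
  have sf: "\<And>x. x \<in> X \<Longrightarrow> lv f x \<in> Lv \<and> x \<in> ps St T (V(Z := lv f x)) f" using iv by (auto simp: inv_def)
  have gc: "good (ochild f i)" using g i by (cases f) (auto simp: good_def)
  have ex: "\<exists>Y. nkids (build f X) ! i = build (ochild f i) Y \<and>
          (\<forall>x\<in>Y. \<exists>B\<in>Lv. x \<in> ps St T (V(Z:=B)) (ochild f i))"
  proof (cases f)
    case (PAnd a b) then show ?thesis using sf i by (auto simp: less_Suc_eq intro!: exI[of _ X])
  next
    case (POr a b)
    then have "i = 0 \<or> i = 1" using i by auto
    then show ?thesis
    proof
      assume "i = 0" then show ?thesis using POr sf
        by (auto simp: orset_def intro!: exI[of _ "X \<inter> orset a b"])
    next
      assume "i = 1" then show ?thesis using POr sf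
        by (auto simp: orset_def intro!: exI[of _ "X - orset a b"]) blast
    qed
  next
    case (PBox K a) then show ?thesis using sf i by fastforce
  next
    case (PDia K a) then show ?thesis using sf i dw_prop by fastforce
  qed (use i in auto)
  then show ?thesis using gc inv_from by blast
qed

lemma step_dec:
  assumes g: "good f" and iv: "inv f X" and i: "i < length (nkids (build f X))"
    and s: "s \<in> X" and s': "s' \<in> nset (nkids (build f X) ! i)"
    and sc: "stepcond T (nrule (build f X)) (nfml (build f X)) s s'"
  shows "lv (ochild f i) s' \<subseteq> lv f s"
proof -
  have "lv f s \<in> Lv" using iv s by (auto simp: inv_def)
  then show ?thesis using LV child_sem[OF assms] by blast
qed

lemma at_sub:
  "valid_pos (build f X) q \<Longrightarrow> good f \<Longrightarrow> inv f X \<Longrightarrow>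
   \<exists>Y. at (build f X) q = build (osub f q) Y \<and> inv (osub f q) Y \<and> good (osub f q)"
proof (induction q arbitrary: f X)
  case Nil then show ?case by auto
next
  case (Cons i q)
  then have i: "i < length (nkids (build f X))" by simp
  from kid[OF Cons.prems(2,3) i] obtain Y where
    Y: "nkids (build f X) ! i = build (ochild f i) Y" "inv (ochild f i) Y" "good (ochild f i)" by blast
  have v: "valid_pos (build (ochild f i) Y) q" using Cons.prems(1) Y(1) by simp
  have "\<exists>Y'. at (build (ochild f i) Y) q = build (osub (ochild f i) q) Y' \<and>
     inv (osub (ochild f i) q) Y' \<and> good (osub (ochild f i) q)"
    by (rule Cons.IH) (use v Y in auto)
  then show ?case using Y(1) by simp
qed

end


context constr begin

definition tt :: "('s, 'a, 'v) tab" where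
  "tt = Nd S [] (PFix sg Z Phi) (Some RFix) [Nd S D (PVar U) (Some RUn) [build Phi S]]"

lemma good_Phi: "good Phi" using Phi_ff Phi_nn Ufv by (simp add: good_def)

lemma inv_Phi: "inv Phi S" by (rule inv_from) (use root in auto)

lemma pos_tt: "p \<in> positions tt \<longleftrightarrow> p = [] \<or> p = [0] \<or> (\<exists>q. p = 0#0#q \<and> valid_pos (build Phi S) q)"
proof (cases p)
  case Nil then show ?thesis by (simp add: positions_def)
next
  case (Cons i r)
  then show ?thesis by (cases r) (auto simp: positions_def tt_def)
qed

lemma nkids_tt[simp]: "nkids tt = [Nd S D (PVar U) (Some RUn) [build Phi S]]" by (simp add: tt_def)
lemma nrule_tt[simp]: "nrule tt = Some RFix" by (simp add: tt_def)
lemma nset_tt[simp]: "nset tt = S" by (simp add: tt_def)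
lemma nfml_tt[simp]: "nfml tt = PFix sg Z Phi" by (simp add: tt_def)
lemma ndefs_tt[simp]: "ndefs tt = []" by (simp add: tt_def)
lemma at_tt0[simp]: "at tt [0] = Nd S D (PVar U) (Some RUn) [build Phi S]" by (simp add: tt_def)
lemma at_tt00[simp]: "at tt (0#0#q) = at (build Phi S) q" by (simp add: tt_def)
lemma at_ttN[simp]: "at tt [] = tt" by simp

lemma ddom_D: "ddom D = {U}" by (simp add: ddom_def D_def)

lemma deflist_D: "deflist_ok D"
  using Phi_ff UZ Ufv by (auto simp: deflist_ok_def D_def bvars_fixfree)

lemma lv_St: assumes "B \<in> Lv" shows "ps St T (V(Z := B)) f \<subseteq> St"
proof (rule ps_St)
  have "B \<subseteq> St" using assms Lv_S S_St by blast
  then show "\<forall>Y. (V(Z := B)) Y \<subseteq> St" using V_St by simp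
qed

lemma seq_ok_build:
  assumes g: "good f" and iv: "inv f X"
  shows "sequent_ok St (nseq (build f X))"
proof -
  have "X \<subseteq> St"
  proof
    fix x assume "x \<in> X"
    then have "lv f x \<in> Lv" "x \<in> ps St T (V(Z := lv f x)) f" using iv by (auto simp: inv_def)
    then show "x \<in> St" using lv_St[of "lv f x"] by blast
  qed
  moreover have "positive U (to_core (psubst Z U f))"
    using g pos_psubst[of f Z U] by (simp add: good_def positive_def)
  moreover have "U \<notin> bvars (psubst Z U f)"
    using g by (simp add: good_def bvars_fixfree fixfree_psubst)
  ultimately show ?thesis using g deflist_D
    by (simp add: sequent_ok_def nseq_def nfml_build good_def ddom_D)
qed

lemma rule_build:
  assumes g: "good f" and iv: "inv f X" and r: "nrule (build f X) = Some r"
  shows "rule_inst T r (nseq (build f X)) (map nseq (nkids (build f X)))"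
proof (cases f)
  case (PDia K a)
  have "\<forall>s\<in>X. \<exists>k\<in>K. (s, k, dw K a s) \<in> T"
    using dw_prop iv PDia by (auto simp: inv_def) 
  then show ?thesis using PDia r g by (auto simp: nseq_def good_def nfml_build)
next
  case (POr a b)
  then show ?thesis using r g by (auto simp: nseq_def good_def nfml_build)
qed (use r g in \<open>auto simp: nseq_def good_def nfml_build\<close>)

lemma leaf_build: "good f \<Longrightarrow> nrule (build f X) = None \<Longrightarrow>
   nkids (build f X) = [] \<and> (\<exists>Y. f = PVar Y \<or> f = PNVar Y)"
  by (cases f) (auto simp: good_def)

lemma nokids_build: "nkids (build f X) = [] \<Longrightarrow> nrule (build f X) = None"
  by (cases f) auto

lemma noRUn_build: "nrule (build f X) \<noteq> Some RUn"
  by (cases f) auto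

lemma fresh_U: "fresh U [] (PFix sg Z Phi)"
  using Ufv UZ Phi_ff by (auto simp: fresh_def ddom_def bvars_fixfree)

lemma inner:
  assumes "valid_pos (build Phi S) q"
  obtains Y where "at (build Phi S) q = build (osub Phi q) Y" "inv (osub Phi q) Y" "good (osub Phi q)"
  using at_sub[OF assms good_Phi inv_Phi] by blast

lemma inv_PVarZ: "inv (PVar Z) Y \<Longrightarrow> Y \<subseteq> S"
  using Lv_S by (auto simp: inv_def)

lemma c_leaf_tt:
  assumes v: "valid_pos (build Phi S) q" and at: "at (build Phi S) q = build (PVar Z) Y"
    and iv: "inv (PVar Z) Y"
  shows "c_leaf tt (0#0#q)"
proof -
  have "below [0] (0#0#q)" by (auto simp: below_def)
  then show ?thesis using v at inv_PVarZ[OF iv]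
    unfolding c_leaf_def is_leaf_def
    by (auto simp: pos_tt ddom_D intro!: exI[of _ "[0]"])
qed

lemma is_tab: "is_tableau St T tt"
  unfolding is_tableau_def
proof (intro conjI)
  show "ndefs tt = []" by (simp add: tt_def)
next
  show "\<forall>p \<in> positions tt. sequent_ok St (nseq (at tt p)) \<and>
          (case nrule (at tt p) of None \<Rightarrow> nkids (at tt p) = [] \<and> terminal T tt p
           | Some r \<Rightarrow> rule_inst T r (nseq (at tt p)) (map nseq (nkids (at tt p))))"
  proof
  fix p assume p: "p \<in> positions tt"
  then consider "p = []" | "p = [0]" | q where "p = 0#0#q" "valid_pos (build Phi S) q"
    by (auto simp: pos_tt)
  then show "sequent_ok St (nseq (at tt p)) \<and>
          (case nrule (at tt p) of None \<Rightarrow> nkids (at tt p) = [] \<and> terminal T tt p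
           | Some r \<Rightarrow> rule_inst T r (nseq (at tt p)) (map nseq (nkids (at tt p))))"
  proof cases
    case 1
    have "sequent_ok St (S, [], PFix sg Z Phi)"
      using S_St by (simp add: sequent_ok_def deflist_ok_def ddom_def)
    moreover have "rule_inst T RFix (S, [], PFix sg Z Phi) [(S, D, PVar U)]"
      using fresh_U by (auto simp: D_def)
    ultimately show ?thesis using 1 by (simp add: nseq_def)
  next
    case 2
    have "sequent_ok St (S, D, PVar U)"
      using S_St deflist_D by (auto simp: sequent_ok_def ddom_D positive_def)
    moreover have "map_of D U = Some (PFix sg Z Phi)" by (simp add: D_def)
    ultimately show ?thesis using 2 Phi_ff by (auto simp: nseq_def nfml_build)
  next
    case 3
    obtain Y where Y: "at (build Phi S) q = build (osub Phi q) Y" "inv (osub Phi q) Y" "good (osub Phi q)"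
      using inner[OF 3(2)] by blast
    have so: "sequent_ok St (nseq (at tt p))" using 3 Y seq_ok_build by simp
    show ?thesis
    proof (cases "nrule (at tt p)")
      case (Some r)
      then show ?thesis using so 3 Y rule_build by simp
    next
      case None
      then have lb: "nkids (build (osub Phi q) Y) = [] \<and> (\<exists>Y'. osub Phi q = PVar Y' \<or> osub Phi q = PNVar Y')"
        using leaf_build 3 Y by simp
      then obtain Y' where Y': "osub Phi q = PVar Y' \<or> osub Phi q = PNVar Y'" by blast
      have trm: "terminal T tt p"
      proof (cases "osub Phi q = PVar Z")
        case True
        then have "c_leaf tt p" using c_leaf_tt[OF 3(2)] Y 3 by simp
        then show ?thesis by (simp add: terminal_def)
      next
        case False
        then have "Y' \<noteq> Z" "Y' \<noteq> U" using Y' Y(3) by (auto simp: good_def)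
        then show ?thesis using Y' 3 Y unfolding terminal_def by (auto simp: ddom_D)
      qed
      show ?thesis using so None lb trm 3 Y by simp
    qed
  qed
  qed
qed

end


context constr begin

lemma trace_tt:
  "trace T tt n' s' n s \<Longrightarrow> n' = 0#0#q' \<Longrightarrow> valid_pos (build Phi S) q' \<Longrightarrow> s' \<in> nset (at tt n') \<Longrightarrow>
   (\<exists>q. n = 0#0#q \<and> valid_pos (build Phi S) q \<and> s \<in> nset (at tt n) \<and>
        lv (osub Phi q') s' \<subseteq> lv (osub Phi q) s)
   \<or> (n = [0] \<and> s \<in> S \<and> lv (osub Phi q') s' \<subseteq> lv Phi s) \<or> n = []"
proof (induction rule: trace.induct)
  case (trace_refl n s)
  then show ?case by auto
next
  case (trace_step n' s' m s'' n s)
  from trace_step.prems have IH: "(\<exists>q. m = 0#0#q \<and> valid_pos (build Phi S) q \<and> s'' \<in> nset (at tt m) \<and>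
        lv (osub Phi q') s' \<subseteq> lv (osub Phi q) s'')
   \<or> (m = [0] \<and> s'' \<in> S \<and> lv (osub Phi q') s' \<subseteq> lv Phi s'') \<or> m = []"
    by (rule trace_step.IH)
  from trace_step.hyps(2) obtain i where
    np: "n \<in> positions tt" and i: "i < length (nkids (at tt n))" and mi: "m = n @ [i]"
    and s''m: "s'' \<in> nset (at tt m)" and sn: "s \<in> nset (at tt n)"
    and sc: "stepcond T (nrule (at tt n)) (nfml (at tt n)) s s''"
    unfolding step_def is_child_def stepcond_def by blast
  from IH show ?case
  proof (elim disjE exE conjE)
    fix q assume mq: "m = 0#0#q" and vq: "valid_pos (build Phi S) q"
      and le: "lv (osub Phi q') s' \<subseteq> lv (osub Phi q) s''"
    show ?case
    proof (cases q rule: rev_exhaust)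
      case Nil
      then have "n = [0]" using mq mi by simp
      then have "s = s''" "s \<in> S" using sc sn by (auto simp: stepcond_def)
      then show ?thesis using le Nil \<open>n = [0]\<close> by simp
    next
      case (snoc q0 j)
      then have n: "n = 0#0#q0" and ij: "i = j" using mq mi by auto
      have vq0: "valid_pos (build Phi S) q0" and j: "j < length (nkids (at (build Phi S) q0))"
        using vq snoc by (auto simp: valid_snoc)
      obtain Y where Y: "at (build Phi S) q0 = build (osub Phi q0) Y" "inv (osub Phi q0) Y" "good (osub Phi q0)"
        using inner[OF vq0] by blast
      have atm: "at tt m = nkids (build (osub Phi q0) Y) ! j"
        using mq snoc Y(1) by (simp add: at_snoc)
      have "lv (ochild (osub Phi q0) j) s'' \<subseteq> lv (osub Phi q0) s"
        apply (rule step_dec[OF Y(3) Y(2)])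
        using j Y(1) sn n s''m atm sc ij by auto
      then have "lv (osub Phi q') s' \<subseteq> lv (osub Phi q0) s"
        using le snoc by (auto simp: osub_snoc)
      then show ?thesis using n vq0 sn by auto
    qed
  next
    assume "m = [0]"
    then have "n = []" using mi by (cases n) auto
    then show ?case by simp
  next
    assume "m = []" then show ?case using mi by simp
  qed
qed

lemma compnode_tt: "comp_node tt m \<Longrightarrow> m = [0]"
  unfolding comp_node_def
proof (elim conjE)
  assume "m \<in> positions tt" "nrule (at tt m) = Some RUn"
  then show "m = [0]"
  proof (auto simp: pos_tt)
    fix q assume "nrule (at (build Phi S) q) = Some RUn" "valid_pos (build Phi S) q"
    then show False using inner[of q] noRUn_build by metis
  qed
qed

lemma psubst_U: "fixfree f \<Longrightarrow> U \<notin> fvars f \<Longrightarrow> psubst Z U f = PVar U \<Longrightarrow> f = PVar Z"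
  by (cases f) (auto split: if_splits)

lemma leaf_shape:
  assumes "is_leaf tt n"
  obtains q Y where "n = 0#0#q" "valid_pos (build Phi S) q" "at (build Phi S) q = build (osub Phi q) Y"
    "inv (osub Phi q) Y" "good (osub Phi q)" "nkids (build (osub Phi q) Y) = []"
proof -
  from assms have "n \<in> positions tt" "nkids (at tt n) = []" by (auto simp: is_leaf_def)
  then obtain q where q: "n = 0#0#q" "valid_pos (build Phi S) q" by (auto simp: pos_tt)
  obtain Y where Y: "at (build Phi S) q = build (osub Phi q) Y" "inv (osub Phi q) Y" "good (osub Phi q)"
    using inner[OF q(2)] by blast
  show ?thesis using that q Y \<open>nkids (at tt n) = []\<close> by simp
qed

lemma comp_leaf_tt:
  assumes v: "valid_pos (build Phi S) q" and at: "at (build Phi S) q = build (PVar Z) Y"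
    and iv: "inv (PVar Z) Y"
  shows "comp_leaf tt [0] (0#0#q)"
proof -
  have b: "below [0] (0#0#q)" by (auto simp: below_def)
  have cb: "cl_base tt [0] (0#0#q)"
    unfolding cl_base_def comp_node_def is_leaf_def
    using b v at inv_PVarZ[OF iv] by (simp add: pos_tt)
  have nc: "\<not> (\<exists>m'. below [0] m' \<and> comp_node tt m' \<and> P m')" for P
    using compnode_tt by (auto simp: below_def)
  have "cl_upto tt (Suc (Suc (length q))) [0] (0#0#q)"
    unfolding cl_upto.simps(2)
    apply (intro conjI)
      apply (rule cb)
     apply simp
    using nc by blast
  then show ?thesis unfolding comp_leaf_def by simp
qed

lemma cm_R:
  assumes mu: "sg = Mu" and c: "cm T tt [0] x s"
  shows "\<exists>B\<in>Lv. x \<in> B \<and> s \<notin> B"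
proof -
  from c obtain m' where cl: "comp_leaf tt [0] m'" and xm: "x \<in> nset (at tt m')"
    and cw: "cw T tt m' x [0] s"
    by (cases rule: cm.cases) auto
  have tr: "trace T tt m' x [0] s"
    using cw
  proof (cases rule: cw.cases)
    case cw_trace then show ?thesis by simp
  next
    case (cw_comp m u u') then show ?thesis using compnode_tt by blast
  qed
  have "cl_base tt [0] m'" using cl unfolding comp_leaf_def
    by (cases "length m'") auto
  then have lf: "is_leaf tt m'" and fm: "nfml (at tt m') = PVar U"
    by (auto simp: cl_base_def)
  from lf obtain q Y where q: "m' = 0#0#q" "valid_pos (build Phi S) q"
    "at (build Phi S) q = build (osub Phi q) Y" "inv (osub Phi q) Y" "good (osub Phi q)"
    by (rule leaf_shape)
  have "osub Phi q = PVar Z"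
    using fm q psubst_U[of "osub Phi q"] by (auto simp: good_def nfml_build)
  note q = q[unfolded this]
  from trace_tt[OF tr q(1,2) xm] have "s \<in> S" and le: "lv (PVar Z) x \<subseteq> lv Phi s"
    using \<open>osub Phi q = PVar Z\<close> by auto
  have "x \<in> lv (PVar Z) x" using q(4) xm q(1,3) by (auto simp: inv_def)
  with le have xin: "x \<in> lv Phi s" by blast
  have lvin: "lv Phi s \<in> Lv" using inv_Phi \<open>s \<in> S\<close> by (auto simp: inv_def)
  from muwf[OF mu] \<open>s \<in> S\<close> obtain B where B: "B \<in> Lv" "s \<notin> B" "s \<in> ps St T (V(Z:=B)) Phi" by blast
  have "lv Phi s \<subseteq> B" using LV[OF B(1,3)] by blast
  then have "s \<notin> lv Phi s" using B by blast
  then show ?thesis using xin lvin by blast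
qed

lemma wf_cm: "sg = Mu \<Longrightarrow> wfP (cm T tt [0])"
proof -
  assume mu: "sg = Mu"
  have "cm T tt [0] \<le> (\<lambda>x s. \<exists>B\<in>Lv. x \<in> B \<and> s \<notin> B)"
    using cm_R[OF mu] by blast
  then show ?thesis using muwf[OF mu] wfp_subset by blast
qed

lemma leaf_ok: "is_leaf tt n \<Longrightarrow> leaf_success T V tt n"
proof -
  assume lf: "is_leaf tt n"
  then obtain q Y where q: "n = 0#0#q" "valid_pos (build Phi S) q" "at (build Phi S) q = build (osub Phi q) Y"
    "inv (osub Phi q) Y" "good (osub Phi q)" "nkids (build (osub Phi q) Y) = []"
    by (rule leaf_shape)
  then obtain Y' where Y': "osub Phi q = PVar Y' \<or> osub Phi q = PNVar Y'"
    using leaf_build nokids_build by blast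
  have gd: "Y' \<noteq> U" using Y' q(5) by (auto simp: good_def)
  show ?thesis
  proof (cases "osub Phi q = PVar Z")
    case True
    note qq = q[unfolded True]
    have cl: "c_leaf tt n" using c_leaf_tt[OF qq(2,3,4)] qq(1) by simp
    have md: "map_of (ndefs (at tt n)) U = Some (PFix sg Z Phi)" using qq by (simp add: D_def)
    have nf: "nfml (at tt n) = PVar U" using qq by simp
    show ?thesis
    proof (cases sg)
      case Nuf then show ?thesis using cl md nf unfolding leaf_success_def by blast
    next
      case Mu
      have "comp_leaf tt [0] n" using comp_leaf_tt[OF qq(2,3,4)] qq(1) by simp
      then show ?thesis using cl md nf Mu wf_cm unfolding leaf_success_def by blast
    qed
  next
    case False
    show ?thesis
    proof (cases "osub Phi q = PVar Y'")
      case True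
      then have "Y' \<noteq> Z" using False by simp
      then have "Y \<subseteq> V Y'" using q(4) True by (auto simp: inv_def)
      then show ?thesis using q True gd \<open>Y' \<noteq> Z\<close> unfolding leaf_success_def
        by (auto simp: ddom_D)
    next
      case False
      then have PN: "osub Phi q = PNVar Y'" using Y' by simp
      then have "Y' \<noteq> Z" using q(5) by (auto simp: good_def)
      then have "Y \<inter> V Y' = {}" using q(4) PN by (auto simp: inv_def)
      then show ?thesis using q PN gd \<open>Y' \<noteq> Z\<close> unfolding leaf_success_def
        by (auto simp: ddom_D)
    qed
  qed
qed

theorem main: "successful_tableau St T V tt \<and> nseq tt = (S, [], PFix sg Z Phi)"
  using is_tab leaf_ok by (auto simp: successful_tableau_def nseq_def)

end


lemma wf_levels:
  fixes C :: "'x set set"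
  assumes least: "\<forall>M. M \<subseteq> C \<longrightarrow> M \<noteq> {} \<longrightarrow> (\<exists>A\<in>M. \<forall>B\<in>M. A \<subseteq> B)"
  shows "wfP (\<lambda>x s. \<exists>B\<in>C. x \<in> B \<and> s \<notin> B)"
  unfolding wfp_eq_minimal
proof (intro allI impI)
  fix Q :: "'x set" and x assume xQ: "x \<in> Q"
  define M where "M = {B\<in>C. \<exists>q\<in>Q. q \<in> B}"
  show "\<exists>z\<in>Q. \<forall>y. (\<exists>B\<in>C. y \<in> B \<and> z \<notin> B) \<longrightarrow> y \<notin> Q"
  proof (cases "M = {}")
    case True then show ?thesis using xQ by (auto simp: M_def)
  next
    case False
    have MC: "M \<subseteq> C" by (auto simp: M_def)
    obtain B0 where B0: "B0 \<in> M" "\<forall>B\<in>M. B0 \<subseteq> B" using least[rule_format, OF MC False] by blast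
    then obtain q0 where q0: "q0 \<in> Q" "q0 \<in> B0" by (auto simp: M_def)
    show ?thesis
    proof (intro bexI[OF _ q0(1)] allI impI notI)
      fix y assume "\<exists>B\<in>C. y \<in> B \<and> q0 \<notin> B" "y \<in> Q"
      then obtain B where "B \<in> C" "y \<in> B" "q0 \<notin> B" by blast
      then have "B \<in> M" using \<open>y \<in> Q\<close> by (auto simp: M_def)
      then show False using B0 q0 \<open>q0 \<notin> B\<close> by blast
    qed
  qed
qed

lemma least_some:
  assumes least: "\<forall>M. M \<subseteq> C \<longrightarrow> M \<noteq> {} \<longrightarrow> (\<exists>A\<in>M. \<forall>B\<in>M. A \<subseteq> B)"
    and B: "B \<in> C" "P B"
  shows "let L = (SOME A. A \<in> C \<and> P A \<and> (\<forall>B'\<in>C. P B' \<longrightarrow> A \<subseteq> B')) in L \<in> C \<and> L \<subseteq> B \<and> P L"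
proof -
  have "\<exists>A. A \<in> C \<and> P A \<and> (\<forall>B'\<in>C. P B' \<longrightarrow> A \<subseteq> B')"
    using least[rule_format, of "{A\<in>C. P A}"] B by blast
  from someI_ex[OF this] show ?thesis using B by (auto simp: Let_def)
qed

theorem corollary12:
  fixes St :: "'s set" and T :: "('s \<times> 'a \<times> 's) set" and V :: "'v::countable \<Rightarrow> 's set"
    and Z :: 'v and sg :: fp and Phi :: "('a, 'v) pnf"
  assumes "infinite (UNIV :: 'v set)"
    and "T \<subseteq> St \<times> UNIV \<times> St"
    and "\<forall>Y. V Y \<subseteq> St"
    and "fixfree Phi"
    and "wf_fml (to_core (PFix sg Z Phi))"
  shows "\<exists>t. successful_tableau St T V t \<and>
           nseq t = (psem St T V (PFix sg Z Phi), [], PFix sg Z Phi)"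
proof -
  note inf = assms(1) and TS = assms(2) and VS = assms(3) and ff = assms(4) and wff = assms(5)
  have nn: "noneg Z Phi" using wf_noneg[OF wff ff] .
  obtain U where U: "U \<notin> insert Z (fvars Phi)"
  proof -
    have "finite (insert Z (fvars Phi))" by (simp add: finite_fvars)
    from ex_new_if_finite[OF inf this] show ?thesis using that by blast
  qed
  then have UZ: "U \<noteq> Z" and Ufv: "U \<notin> fvars Phi" by auto
  define F where "F X = ps St T (V(Z:=X)) Phi" for X
  have Fmono: "\<And>X Y. X \<subseteq> Y \<Longrightarrow> F X \<subseteq> F Y" unfolding F_def by (rule ps_mono[OF nn])
  have VZ: "\<forall>Y. (V(Z:=X)) Y \<subseteq> St" if "X \<subseteq> St" for X using that VS by simp
  have FSt: "F X \<subseteq> St" if "X \<subseteq> St" for X unfolding F_def by (rule ps_St[OF VZ[OF that]])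
  have semF: "sem St T (V(Z:=X)) (to_core Phi) = F X" if "X \<subseteq> St" for X
    unfolding F_def by (rule psem_ps[OF ff VZ[OF that] TS])
  define S where "S = psem St T V (PFix sg Z Phi)"
  show ?thesis
  proof (cases sg)
    case Nuf
    have eq: "(S' \<subseteq> St \<and> S' \<subseteq> sem St T (V(Z:=S')) (to_core Phi)) = (S' \<subseteq> St \<and> S' \<subseteq> F S')" for S'
      using semF[of S'] by blast
    have S: "S = \<Union>{S'. S' \<subseteq> St \<and> S' \<subseteq> F S'}"
      unfolding S_def psem_def using Nuf eq by simp
    have SSt: "S \<subseteq> St" using S by auto
    have root: "\<forall>s\<in>S. s \<in> F S"
    proof
      fix s assume "s \<in> S"
      then obtain S' where "s \<in> S'" "S' \<subseteq> St" "S' \<subseteq> F S'" using S by auto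
      moreover have "S' \<subseteq> S" using S \<open>S' \<subseteq> St\<close> \<open>S' \<subseteq> F S'\<close> by auto
      ultimately show "s \<in> F S" using Fmono by blast
    qed
    interpret c: constr St T V Z U Phi sg S "{S}" "\<lambda>_ _. S"
    proof unfold_locales
      show "\<And>\<psi> x B. B \<in> {S} \<Longrightarrow> x \<in> ps St T (V(Z := B)) \<psi> \<Longrightarrow>
           S \<in> {S} \<and> S \<subseteq> B \<and> x \<in> ps St T (V(Z := S)) \<psi>" by simp
      show "\<forall>s\<in>S. \<exists>B\<in>{S}. s \<in> ps St T (V(Z := B)) Phi" using root by (simp add: F_def)
      show "sg = Mu \<Longrightarrow> (\<forall>s\<in>S. \<exists>B\<in>{S}. s \<notin> B \<and> s \<in> ps St T (V(Z := B)) Phi) \<and>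
          wfP (\<lambda>x s. \<exists>B\<in>{S}. x \<in> B \<and> s \<notin> B)" using Nuf by simp
    qed (use TS VS ff nn UZ Ufv SSt in simp_all)
    show ?thesis using c.main unfolding S_def by blast
  next
    case Mu
    have S: "S = St - \<Union>{S'. S' \<subseteq> St \<and> S' \<subseteq> St - F (St - S')}"
    proof -
      have "sem St T (V(Z:=S')) (csubst Z (Neg (Var Z)) (to_core Phi)) = F (St - S')" for S'
        using csubst_sem[OF ff, of St T "V(Z:=S')" Z] semF[of "St - S'"] by simp
      then show ?thesis unfolding S_def psem_def using Mu by simp
    qed
    have SSt: "S \<subseteq> St" using S by auto
    have closed: "F S \<subseteq> S"
    proof
      fix s assume sF: "s \<in> F S"
      have "s \<in> St" using sF FSt[OF SSt] by blast
      moreover have "s \<notin> S'" if "S' \<subseteq> St" "S' \<subseteq> St - F (St - S')" for S'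
      proof
        assume "s \<in> S'"
        have "S \<subseteq> St - S'" using S that by blast
        then have "F S \<subseteq> F (St - S')" by (rule Fmono)
        then show False using sF \<open>s \<in> S'\<close> that by blast
      qed
      ultimately show "s \<in> S" using S by blast
    qed
    have lfp: "S \<subseteq> X" if "X \<subseteq> St" "F X \<subseteq> X" for X
    proof -
      have "St - (St - X) = X" using that by blast
      then have "St - X \<subseteq> St - F (St - (St - X))" using that by auto
      then have "St - X \<in> {S'. S' \<subseteq> St \<and> S' \<subseteq> St - F (St - S')}" by blast
      then show ?thesis using S by blast
    qed
    obtain C where H: "(\<forall>A\<in>C. \<forall>B\<in>C. A \<subseteq> B \<or> B \<subseteq> A)
     \<and> (\<forall>M. M \<subseteq> C \<longrightarrow> M \<noteq> {} \<longrightarrow> (\<exists>A\<in>M. \<forall>B\<in>M. A \<subseteq> B))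
     \<and> (\<forall>P. F P \<subseteq> P \<longrightarrow> (\<forall>A\<in>C. A \<subseteq> P))
     \<and> F (\<Union>C) \<subseteq> \<Union>C
     \<and> (\<forall>A\<in>C. \<forall>s\<in>A. \<exists>B\<in>C. s \<notin> B \<and> s \<in> F B)"
      using tower[of F, OF Fmono] by (rule exE)
    note least = H[THEN conjunct2, THEN conjunct1]
    note ind = H[THEN conjunct2, THEN conjunct2, THEN conjunct1]
    note top = H[THEN conjunct2, THEN conjunct2, THEN conjunct2, THEN conjunct1]
    note rank = H[THEN conjunct2, THEN conjunct2, THEN conjunct2, THEN conjunct2]
    have CS: "\<forall>B\<in>C. B \<subseteq> S" using ind closed by blast
    have SC: "S \<subseteq> \<Union>C" using lfp[OF _ top] CS SSt by blast
    define lv where "lv \<psi> x = (SOME A. A \<in> C \<and> x \<in> ps St T (V(Z:=A)) \<psi> \<and>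
        (\<forall>B'\<in>C. x \<in> ps St T (V(Z:=B')) \<psi> \<longrightarrow> A \<subseteq> B'))" for \<psi> x
    have LV: "lv \<psi> x \<in> C \<and> lv \<psi> x \<subseteq> B \<and> x \<in> ps St T (V(Z := lv \<psi> x)) \<psi>"
      if "B \<in> C" "x \<in> ps St T (V(Z:=B)) \<psi>" for \<psi> x B
      using least_some[OF least, of B "\<lambda>A. x \<in> ps St T (V(Z:=A)) \<psi>"] that
      unfolding lv_def Let_def by blast
    have rootm: "\<forall>s\<in>S. \<exists>B\<in>C. s \<notin> B \<and> s \<in> F B" using SC rank by blast
    interpret c: constr St T V Z U Phi sg S C lv
    proof unfold_locales
      show "\<And>\<psi> x B. B \<in> C \<Longrightarrow> x \<in> ps St T (V(Z := B)) \<psi> \<Longrightarrow>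
           lv \<psi> x \<in> C \<and> lv \<psi> x \<subseteq> B \<and> x \<in> ps St T (V(Z := lv \<psi> x)) \<psi>"
        by (rule LV)
      show "\<forall>s\<in>S. \<exists>B\<in>C. s \<in> ps St T (V(Z := B)) Phi" using rootm by (auto simp: F_def)
      show "sg = Mu \<Longrightarrow> (\<forall>s\<in>S. \<exists>B\<in>C. s \<notin> B \<and> s \<in> ps St T (V(Z := B)) Phi) \<and>
          wfP (\<lambda>x s. \<exists>B\<in>C. x \<in> B \<and> s \<notin> B)"
        using rootm wf_levels[OF least] by (auto simp: F_def)
    qed (use TS VS ff nn UZ Ufv SSt CS in simp_all)
    show ?thesis using c.main unfolding S_def by blast
  qed
qed

end
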